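(* Fix an integer $r\ge 2$. For integers $n\ge 1$ and $L\ge 0$ let $$G_2(n,r,L)=\frac{2^{r+1}-1}{2^{r}-1}\left(2^{rL}-1\right)+M_r\!\left(\lfloor n/2^{L}\rfloor\right)-r-1,$$ where $M_r(k)=\binom{k+r}{r}$. Let $L_{op}=L_{op}(n)$ be a value of $L\ge 0$ minimizing $G_2(n,r,L)$, and put $$L^*(n)=\frac{1}{2r}\log_2\frac{2^r-1}{r!\,(2^{r+1}-1)}+\frac{\log_2 n}{2},\qquad K_r=\sqrt{4\,\frac{2^{r+1}-1}{2^r-1}\,\frac{1}{r!}} .$$ Then, asymptotically as $n\to\infty$, $L_{op}$ lies in the interval $[L^*(n)-\tfrac12,\;L^*(n)+\tfrac12]$ up to an error tending to $0$ (i.e. $L^*(n)-\tfrac12-\delta_n\le L_{op}\le L^*(n)+\tfrac12+\delta_n$ with $\delta_n\to 0$), so $L_{op}$ is the integer closest to $L^*(n)$; and for all sufficiently large $n$, $$\frac{1}{\sqrt{2^r}}\,K_r\, n^{r/2}\;<\;G_2(n,r,L_{op})\;<\;\sqrt{2^r}\,K_r\, n^{r/2}.$$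
   Context: $\lfloor x\rfloor$ denotes the integer part of $x$; $M_r(k)=\binom{k+r}{r}$ is the number of monomials of degree at most $k$ in $r$ variables. Interpretation (not needed for the claim): $G_2(n,r,L)$ counts the field multiplications used to evaluate a degree-$n$ polynomial in $\mathbb{F}_2[x_1,\dots,x_r]$ at a point of $\mathbb{F}_{2^m}^r$ by applying $L$ times the decomposition $P=\sum_{i_1,\dots,i_r\in\{0,1\}}x_1^{i_1}\cdots x_r^{i_r}\,P_{i_1,\dots,i_r}(x_1,\dots,x_r)^2$ and evaluating all monomials of degree at most $\lfloor n/2^L\rfloor$ directly. *)

theory Defs
  imports Complex_Main
begin

text \<open>Number of monomials of degree at most k in r variables.\<close>
definition M :: "nat \<Rightarrow> nat \<Rightarrow> nat" where
  "M r k = (k + r) choose r"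

text \<open>G_2(n,r,L); the floor of n / 2^L for natural n is n div 2^L.\<close>
definition G2 :: "nat \<Rightarrow> nat \<Rightarrow> nat \<Rightarrow> real" where
  "G2 n r L = (2 ^ (r + 1) - 1) / (2 ^ r - 1) * (2 ^ (r * L) - 1)
              + real (M r (n div 2 ^ L)) - real r - 1"

definition Lstar :: "nat \<Rightarrow> nat \<Rightarrow> real" where
  "Lstar r n = 1 / (2 * real r) * log 2 ((2 ^ r - 1) / (fact r * (2 ^ (r + 1) - 1)))
               + log 2 (real n) / 2"

definition K :: "nat \<Rightarrow> real" where
  "K r = sqrt (4 * ((2 ^ (r + 1) - 1) / (2 ^ r - 1)) * (1 / fact r))"

end

theory Submission
  imports Defs "HOL-Real_Asymp.Real_Asymp"
begin
lemma M_bounds: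
  fixes r k :: nat
  shows "real k ^ r / fact r \<le> real (M r k) \<and> real (M r k) \<le> (real k + real r) ^ r / fact r"
proof -
  have eq: "real (M r k) = pochhammer (real k + 1) r / fact r"
    unfolding M_def binomial_gbinomial gbinomial_pochhammer' by simp
  have p: "pochhammer (real k + 1) r = (\<Prod>i\<in>{0..<r}. real k + 1 + real i)"
    by (simp add: pochhammer_prod)
  have lo: "real k ^ r \<le> pochhammer (real k + 1) r"
    unfolding p using prod_mono[of "{0..<r}" "\<lambda>_. real k" "\<lambda>i. real k + 1 + real i"]
    by simp
  have hi: "pochhammer (real k + 1) r \<le> (real k + real r) ^ r"
    unfolding p using prod_mono[of "{0..<r}" "\<lambda>i. real k + 1 + real i" "\<lambda>_. real k + real r"]
    by simp
  show ?thesis using lo hi unfolding eq by (simp add: divide_right_mono)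
qed
lemma up_ev:
  fixes r :: nat and \<eta> :: real
  assumes "\<eta> > 0"
  shows "\<exists>V>0. \<forall>v\<ge>V. (v + real r) ^ r \<le> (1 + \<eta>) * v ^ r"
proof -
  have "((\<lambda>v::real. real r / v) \<longlongrightarrow> 0) at_top"
    by (rule tendsto_divide_0[OF tendsto_const]) (rule filterlim_at_top_imp_at_infinity[OF filterlim_ident])
  hence "((\<lambda>v::real. (1 + real r / v) ^ r) \<longlongrightarrow> (1 + 0) ^ r) at_top"
    by (intro tendsto_intros)
  hence "\<forall>\<^sub>F v in at_top. (1 + real r / v) ^ r < 1 + \<eta>"
    using assms by (intro order_tendstoD) auto
  moreover have "\<forall>\<^sub>F v in at_top. (v::real) > 0" by (rule eventually_gt_at_top)
  ultimately have "\<forall>\<^sub>F v in at_top. (v + real r) ^ r \<le> (1 + \<eta>) * v ^ r"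
  proof eventually_elim
    case (elim v)
    have "(v + real r) ^ r = v ^ r * (1 + real r / v) ^ r"
      using elim(2) by (simp add: power_mult_distrib[symmetric] field_simps)
    also have "\<dots> \<le> v ^ r * (1 + \<eta>)"
      using elim by (intro mult_left_mono) auto
    finally show ?case by (simp add: mult.commute)
  qed
  then obtain V where V: "\<And>v. v \<ge> V \<Longrightarrow> (v + real r) ^ r \<le> (1 + \<eta>) * v ^ r"
    by (auto simp: eventually_at_top_linorder)
  show ?thesis by (rule exI[of _ "max V 1"]) (use V in auto)
qed
lemma low_ev:
  fixes r :: nat and \<eta> :: real
  assumes "\<eta> > 0"
  shows "\<exists>V\<ge>1. \<forall>v\<ge>V. (1 - \<eta>) * v ^ r \<le> (v - 1) ^ r"
proof -
  have "((\<lambda>v::real. 1 / v) \<longlongrightarrow> 0) at_top"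
    by (rule tendsto_divide_0[OF tendsto_const]) (rule filterlim_at_top_imp_at_infinity[OF filterlim_ident])
  hence "((\<lambda>v::real. (1 - 1 / v) ^ r) \<longlongrightarrow> (1 - 0) ^ r) at_top"
    by (intro tendsto_intros)
  hence "\<forall>\<^sub>F v in at_top. (1 - 1 / v) ^ r > 1 - \<eta>"
    using assms by (intro order_tendstoD) auto
  moreover have "\<forall>\<^sub>F v in at_top. (v::real) > 0" by (rule eventually_gt_at_top)
  ultimately have "\<forall>\<^sub>F v in at_top. (1 - \<eta>) * v ^ r \<le> (v - 1) ^ r"
  proof eventually_elim
    case (elim v)
    have "(v - 1) ^ r = v ^ r * (1 - 1 / v) ^ r"
      using elim(2) by (simp add: power_mult_distrib[symmetric] field_simps)
    moreover have "v ^ r * (1 - \<eta>) \<le> v ^ r * (1 - 1 / v) ^ r"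
      using elim by (intro mult_left_mono) auto
    ultimately show ?case by (simp add: mult.commute)
  qed
  then obtain V where V: "\<And>v. v \<ge> V \<Longrightarrow> (1 - \<eta>) * v ^ r \<le> (v - 1) ^ r"
    by (auto simp: eventually_at_top_linorder)
  show ?thesis by (rule exI[of _ "max V 1"]) (use V in auto)
qed
lemma g_sym: "(2::real) powr a + 2 powr (-a) = 2 powr \<bar>a\<bar> + 2 powr (-\<bar>a\<bar>)"
  by (cases "a \<ge> 0") auto

lemma xinv_mono:
  fixes x y :: real assumes "1 \<le> x" "x \<le> y" shows "x + 1/x \<le> y + 1/y"
proof -
  have "y + 1/y - (x + 1/x) = (y - x) * (1 - 1/(x*y))"
    using assms by (simp add: field_simps)
  moreover have "1/(x*y) \<le> 1" using assms mult_mono[of 1 x 1 y] by (simp add: field_simps)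
  ultimately show ?thesis using assms by (smt (verit) mult_nonneg_nonneg)
qed
lemma xinv_smono:
  fixes x y :: real assumes "1 \<le> x" "x < y" shows "x + 1/x < y + 1/y"
proof -
  have "y + 1/y - (x + 1/x) = (y - x) * (1 - 1/(x*y))"
    using assms by (simp add: field_simps)
  moreover have "1 < x*y" using assms by (smt (verit) mult_less_cancel_left1)
  hence "1/(x*y) < 1" by simp
  ultimately show ?thesis using assms by (smt (verit) mult_pos_pos)
qed
lemma g_mono:
  assumes "\<bar>a\<bar> \<le> \<bar>b\<bar>"
  shows "(2::real) powr a + 2 powr (-a) \<le> 2 powr b + 2 powr (-b)"
proof -
  have "2 powr \<bar>a\<bar> + 1 / 2 powr \<bar>a\<bar> \<le> 2 powr \<bar>b\<bar> + 1 / 2 powr \<bar>b\<bar>"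
    by (rule xinv_mono) (use assms in \<open>auto intro: ge_one_powr_ge_zero\<close>)
  thus ?thesis by (subst (1 2) g_sym) (simp add: powr_minus_divide)
qed
lemma g_smono:
  assumes "\<bar>a\<bar> < \<bar>b\<bar>"
  shows "(2::real) powr a + 2 powr (-a) < 2 powr b + 2 powr (-b)"
proof -
  have "2 powr \<bar>a\<bar> + 1 / 2 powr \<bar>a\<bar> < 2 powr \<bar>b\<bar> + 1 / 2 powr \<bar>b\<bar>"
    by (rule xinv_smono) (use assms in \<open>auto intro: ge_one_powr_ge_zero\<close>)
  thus ?thesis by (subst (1 2) g_sym) (simp add: powr_minus_divide)
qed
definition cc :: "nat \<Rightarrow> real" where "cc r = (2 ^ (r + 1) - 1) / (2 ^ r - 1)"
definition XX :: "nat \<Rightarrow> nat \<Rightarrow> real" where "XX r n = 2 powr (real r * Lstar r n)"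
definition SS :: "nat \<Rightarrow> nat \<Rightarrow> real" where "SS r n = cc r * XX r n"

lemma cc_pos: "r \<ge> 1 \<Longrightarrow> cc r > 0"
proof -
  assume "r \<ge> 1"
  hence "(2::real) ^ r > 1" by (simp add: one_less_power)
  moreover have "(2::real) ^ (r+1) > 1" using calculation by simp
  ultimately show ?thesis unfolding cc_def by simp
qed

lemma XX_sq:
  assumes r: "r \<ge> 1" and n: "n \<ge> 1"
  shows "cc r * (XX r n)^2 * fact r = real n ^ r"
proof -
  define A where "A = ((2 ^ r - 1) / (fact r * (2 ^ (r + 1) - 1)) :: real)"
  have A: "A = 1 / (cc r * fact r)" unfolding A_def cc_def by (simp add: field_simps)
  have Apos: "A > 0" using cc_pos[OF r] unfolding A by simp
  have "(XX r n)^2 = 2 powr (2 * real r * Lstar r n)"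
    unfolding XX_def power2_eq_square powr_add[symmetric] by (simp add: algebra_simps)
  also have "2 * real r * Lstar r n = log 2 A + log 2 (real n ^ r)"
    unfolding Lstar_def A_def[symmetric] using r n by (simp add: log_nat_power field_simps)
  also have "\<dots> = log 2 (A * real n ^ r)" using Apos n by (simp add: log_mult)
  also have "2 powr \<dots> = A * real n ^ r" using Apos n by simp
  finally show ?thesis unfolding A using cc_pos[OF r] by (simp add: field_simps)
qed

lemma XX_pos: "XX r n > 0" unfolding XX_def by simp

lemma P_eq:
  "cc r * 2 ^ (r * L) = SS r n * 2 powr (real r * (real L - Lstar r n))"
proof -
  have "2 powr (real r * (real L - Lstar r n)) = 2 powr (real (r * L)) / XX r n"
    unfolding XX_def by (simp add: powr_diff algebra_simps)
  also have "2 powr (real (r * L)) = (2::real) ^ (r * L)" using powr_realpow[of 2 "r*L"] by simp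
  finally show ?thesis unfolding SS_def using XX_pos[of r n] by simp
qed

lemma Q_eq:
  assumes r: "r \<ge> 1" and n: "n \<ge> 1"
  shows "(real n / 2 ^ L) ^ r / fact r = SS r n * 2 powr (- (real r * (real L - Lstar r n)))"
proof -
  have "2 powr (- (real r * (real L - Lstar r n))) = XX r n / 2 powr (real (r * L))"
    unfolding XX_def by (simp add: powr_diff powr_minus_divide algebra_simps)
  also have "2 powr (real (r * L)) = (2::real) ^ (r * L)" using powr_realpow[of 2 "r*L"] by simp
  finally have e: "SS r n * 2 powr (- (real r * (real L - Lstar r n))) = cc r * (XX r n)^2 / 2 ^ (r * L)"
    unfolding SS_def by (simp add: power2_eq_square)
  show ?thesis unfolding e using XX_sq[OF r n]
    by (simp add: power_divide power_mult field_simps)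
qed


definition gg :: "real \<Rightarrow> real" where "gg a = 2 powr a + 2 powr (-a)"

lemma div_bounds:
  fixes n L :: nat
  shows "real (n div 2^L) \<le> real n / 2^L \<and> real n / 2^L - 1 \<le> real (n div 2^L)"
proof -
  have e: "n div 2^L * 2^L + n mod 2^L = n" by (rule div_mult_mod_eq)
  have m: "n mod 2^L < 2^L" by simp
  have e': "real (n div 2^L) * 2^L + real (n mod 2^L) = real n"
    using arg_cong[OF e, of real] by simp
  have m': "real (n mod 2^L) < 2^L" using m
    by (metis of_nat_less_iff of_nat_numeral of_nat_power)
  have p: "(2::real)^L > 0" by simp
  have a1: "real (n div 2^L) * 2^L \<le> real n" using e' by linarith
  have a2: "real n < (real (n div 2^L) + 1) * 2^L"
  proof -
    have "(real (n div 2^L) + 1) * 2^L = real (n div 2^L) * 2^L + 2^L" by (simp add: distrib_right)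
    thus ?thesis using e' m' by linarith
  qed
  show ?thesis using a1 a2 p by (simp add: field_simps)
qed

lemma G2_lower:
  assumes r: "r \<ge> 1" and eta: "0 < \<eta>" "\<eta> < 1"
  shows "\<exists>D. \<forall>n\<ge>1. \<forall>L. (1 - \<eta>) * (SS r n * gg (real r * (real L - Lstar r n))) - D \<le> G2 n r L"
proof -
  obtain V where V1: "V \<ge> 1" and V: "\<And>v. v \<ge> V \<Longrightarrow> (1 - \<eta>) * v ^ r \<le> (v - 1) ^ r"
    using low_ev[OF eta(1), of r] by blast
  have Vall: "(1 - \<eta>) * v ^ r - V ^ r \<le> (max 0 (v - 1)) ^ r" if v: "v \<ge> 0" for v :: real
  proof (cases "v \<ge> V")
    case True
    have "max 0 (v - 1) = v - 1" using True V1 by simp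
    moreover have "0 \<le> V ^ r" using V1 by simp
    ultimately show ?thesis using V[OF True] by simp
  next
    case False
    have "(1 - \<eta>) * v ^ r \<le> v ^ r" using eta v by (simp add: mult_left_le_one_le)
    also have "\<dots> \<le> V ^ r" using False v by (simp add: power_mono)
    finally have "(1 - \<eta>) * v ^ r \<le> V ^ r" .
    moreover have "0 \<le> max 0 (v-1) ^ r" by simp
    ultimately show ?thesis by linarith
  qed
  show ?thesis
  proof (intro exI allI impI)
    fix n L :: nat assume n: "n \<ge> 1"
    define v where "v = real n / 2^L"
    define k where "k = n div 2^L"
    have kb: "max 0 (v - 1) \<le> real k" using div_bounds[of n L] unfolding v_def k_def by simp
    have v0: "v \<ge> 0" unfolding v_def by simp
    have "(max 0 (v - 1)) ^ r \<le> real k ^ r" by (rule power_mono[OF kb]) simp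
    hence Mlo: "((1 - \<eta>) * v ^ r - V ^ r) / fact r \<le> real (M r k)"
      using M_bounds[of k r] Vall[OF v0] by (smt (verit) divide_right_mono fact_ge_zero)
    have P: "cc r * 2 ^ (r * L) = SS r n * 2 powr (real r * (real L - Lstar r n))" by (rule P_eq)
    have Q: "v ^ r / fact r = SS r n * 2 powr (- (real r * (real L - Lstar r n)))"
      unfolding v_def by (rule Q_eq[OF r n])
    have Pnn: "cc r * 2 ^ (r * L) \<ge> 0" using cc_pos[OF r] by simp
    have G: "G2 n r L = cc r * (2 ^ (r * L) - 1) + real (M r k) - real r - 1"
      unfolding G2_def cc_def k_def by simp
    have "(1 - \<eta>) * (SS r n * gg (real r * (real L - Lstar r n)))
          = (1 - \<eta>) * (cc r * 2 ^ (r * L)) + (1 - \<eta>) * (v ^ r / fact r)"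
      unfolding gg_def P Q by (simp add: algebra_simps)
    also have "\<dots> \<le> cc r * 2 ^ (r * L) + (1 - \<eta>) * (v ^ r / fact r)"
      using Pnn eta by (simp add: mult_left_le_one_le)
    finally have Y: "(1 - \<eta>) * (SS r n * gg (real r * (real L - Lstar r n))) \<le> cc r * 2 ^ (r * L) + (1 - \<eta>) * (v ^ r / fact r)" .
    show "(1 - \<eta>) * (SS r n * gg (real r * (real L - Lstar r n)))
         - (V ^ r / fact r + cc r + real r + 1) \<le> G2 n r L"
    proof -
      have "((1 - \<eta>) * v ^ r - V ^ r) / fact r = (1 - \<eta>) * (v ^ r / fact r) - V ^ r / fact r"
        by (simp add: diff_divide_distrib)
      moreover have "cc r * (2 ^ (r * L) - 1) = cc r * 2 ^ (r * L) - cc r" by (simp add: right_diff_distrib)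
      ultimately show ?thesis unfolding G using Mlo Y by linarith
    qed
  qed
qed

lemma G2_upper:
  assumes r: "r \<ge> 1" and eta: "0 < \<eta>"
  shows "\<exists>D. \<forall>n\<ge>1. \<forall>L. G2 n r L \<le> (1 + \<eta>) * (SS r n * gg (real r * (real L - Lstar r n))) + D"
proof -
  obtain V where V1: "V > 0" and V: "\<And>v. v \<ge> V \<Longrightarrow> (v + real r) ^ r \<le> (1 + \<eta>) * v ^ r"
    using up_ev[OF eta(1), of r] by blast
  have Vall: "(v + real r) ^ r \<le> (1 + \<eta>) * v ^ r + (V + real r) ^ r" if v: "v \<ge> 0" for v :: real
  proof (cases "v \<ge> V")
    case True
    have "0 \<le> (V + real r) ^ r" using V1 by simp
    thus ?thesis using V[OF True] by simp
  next
    case False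
    have "(v + real r) ^ r \<le> (V + real r) ^ r" using False v by (simp add: power_mono)
    moreover have "0 \<le> (1 + \<eta>) * v ^ r" using eta v by simp
    ultimately show ?thesis by simp
  qed
  show ?thesis
  proof (intro exI allI impI)
    fix n L :: nat assume n: "n \<ge> 1"
    define v where "v = real n / 2^L"
    define k where "k = n div 2^L"
    have kb: "real k \<le> v" using div_bounds[of n L] unfolding v_def k_def by simp
    have v0: "v \<ge> 0" unfolding v_def by simp
    have "(real k + real r) ^ r \<le> (v + real r) ^ r" by (rule power_mono) (use kb in auto)
    hence Mhi: "real (M r k) \<le> ((1 + \<eta>) * v ^ r + (V + real r) ^ r) / fact r"
      using M_bounds[of k r] Vall[OF v0] by (smt (verit) divide_right_mono fact_ge_zero)
    have P: "cc r * 2 ^ (r * L) = SS r n * 2 powr (real r * (real L - Lstar r n))" by (rule P_eq)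
    have Q: "v ^ r / fact r = SS r n * 2 powr (- (real r * (real L - Lstar r n)))"
      unfolding v_def by (rule Q_eq[OF r n])
    have Pnn: "cc r * 2 ^ (r * L) \<ge> 0" using cc_pos[OF r] by simp
    have G: "G2 n r L = cc r * (2 ^ (r * L) - 1) + real (M r k) - real r - 1"
      unfolding G2_def cc_def k_def by simp
    have "cc r * 2 ^ (r * L) + (1 + \<eta>) * (v ^ r / fact r) \<le> (1 + \<eta>) * (cc r * 2 ^ (r * L)) + (1 + \<eta>) * (v ^ r / fact r)"
      using Pnn eta by (simp add: mult_le_cancel_right1)
    also have "\<dots> = (1 + \<eta>) * (SS r n * gg (real r * (real L - Lstar r n)))"
      unfolding gg_def P Q by (simp add: algebra_simps)
    finally have X: "cc r * 2 ^ (r * L) + (1 + \<eta>) * (v ^ r / fact r) \<le> (1 + \<eta>) * (SS r n * gg (real r * (real L - Lstar r n)))" .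
    have "G2 n r L \<le> cc r * 2 ^ (r * L) + (1 + \<eta>) * (v ^ r / fact r) + (V + real r) ^ r / fact r"
    proof -
      have "((1 + \<eta>) * v ^ r + (V + real r) ^ r) / fact r = (1 + \<eta>) * (v ^ r / fact r) + (V + real r) ^ r / fact r"
        by (simp add: add_divide_distrib)
      moreover have "cc r * (2 ^ (r * L) - 1) = cc r * 2 ^ (r * L) - cc r" by (simp add: right_diff_distrib)
      ultimately show ?thesis unfolding G using Mhi cc_pos[OF r] by linarith
    qed
    thus "G2 n r L \<le> (1 + \<eta>) * (SS r n * gg (real r * (real L - Lstar r n))) + (V + real r) ^ r / fact r"
      using X by linarith
  qed
qed


lemma SS_pos: "r \<ge> 1 \<Longrightarrow> SS r n > 0"
  unfolding SS_def using cc_pos XX_pos by simp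

lemma SS_sq: "r \<ge> 1 \<Longrightarrow> n \<ge> 1 \<Longrightarrow> (SS r n)^2 = cc r * real n ^ r / fact r"
  using XX_sq[of r n] unfolding SS_def by (simp add: power2_eq_square field_simps)

lemma SS_big:
  assumes r: "r \<ge> 1"
  shows "\<forall>\<^sub>F n in sequentially. D < SS r n"
proof -
  obtain N :: nat where N: "D^2 * fact r / cc r < real N" using reals_Archimedean2 by blast
  show ?thesis unfolding eventually_sequentially
  proof (intro exI allI impI)
    fix n assume n: "max N 1 \<le> n"
    hence n1: "n \<ge> 1" and nN: "real N \<le> real n" by auto
    have "real n \<le> real n ^ r" using n1 r
      by (metis One_nat_def of_nat_1 of_nat_le_iff of_nat_power power_increasing power_one_right)
    hence "cc r * real n / fact r \<le> cc r * real n ^ r / fact r"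
      using cc_pos[OF r] by (simp add: divide_right_mono)
    moreover have "D^2 * fact r / cc r < real n" using N nN by linarith
    hence "D^2 < cc r * real n / fact r"
      using cc_pos[OF r] by (simp add: field_simps)
    ultimately have "D^2 < (SS r n)^2" using SS_sq[OF r n1] by simp
    thus "D < SS r n" using SS_pos[OF r, of n]
      by (smt (verit) power_less_imp_less_base power2_less_0)
  qed
qed

lemma Lstar_ev: "\<forall>\<^sub>F n in sequentially. Lstar r n \<ge> 0"
proof -
  define C where "C = 1 / (2 * real r) * log 2 ((2 ^ r - 1) / (fact r * (2 ^ (r + 1) - 1)))"
  have "filterlim (\<lambda>n::nat. log 2 (real n) / 2) at_top sequentially" by real_asymp
  hence "\<forall>\<^sub>F n in sequentially. log 2 (real n) / 2 \<ge> - C" using filterlim_at_top[THEN iffD1] by blast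
  thus ?thesis unfolding Lstar_def C_def[symmetric] by eventually_elim simp
qed

lemma K_eq:
  assumes r: "r \<ge> 1" and n: "n \<ge> 1"
  shows "K r * real n powr (real r / 2) = 2 * SS r n"
proof -
  have a: "real n powr (real r / 2) = sqrt (real n ^ r)"
    using n by (simp add: powr_half_sqrt[symmetric] powr_powr powr_realpow[symmetric])
  have b: "SS r n = sqrt (cc r * real n ^ r / fact r)"
    using SS_sq[OF r n] SS_pos[OF r, of n] by (metis real_sqrt_unique less_imp_le)
  have "K r * real n powr (real r / 2) = sqrt (4 * (cc r * real n ^ r / fact r))"
    unfolding K_def a cc_def[symmetric] by (simp add: real_sqrt_mult[symmetric])
  also have "\<dots> = 2 * SS r n"
  proof -
    have q: "\<And>x. sqrt (4 * x) = 2 * sqrt x" by (simp add: real_sqrt_mult)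
    show ?thesis by (simp only: q b)
  qed
  finally show ?thesis .
qed

lemma s_eq: "2 powr (real r / 2) = sqrt ((2::real) ^ r)"
  by (simp add: powr_half_sqrt[symmetric] powr_powr powr_realpow[symmetric])


lemma gg_ge2: "gg a \<ge> 2"
  using g_mono[of 0 a] unfolding gg_def by simp

lemma L0_ex:
  assumes "Lstar r n \<ge> 0"
  shows "\<exists>L0::nat. \<bar>real L0 - Lstar r n\<bar> \<le> 1/2"
proof -
  define L0 where "L0 = nat \<lfloor>Lstar r n + 1/2\<rfloor>"
  have "real L0 = of_int \<lfloor>Lstar r n + 1/2\<rfloor>" unfolding L0_def using assms by simp
  moreover have "of_int \<lfloor>Lstar r n + 1/2\<rfloor> \<le> Lstar r n + 1/2" by (rule of_int_floor_le)
  moreover have "Lstar r n + 1/2 < of_int \<lfloor>Lstar r n + 1/2\<rfloor> + 1" by (rule real_of_int_floor_add_one_gt)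
  ultimately show ?thesis by (intro exI[of _ L0]) linarith
qed

context
  fixes r :: nat and Lop :: "nat \<Rightarrow> nat"
  assumes r: "r \<ge> 2"
    and Lop_min: "\<And>n L. n \<ge> 1 \<Longrightarrow> G2 n r (Lop n) \<le> G2 n r L"
begin

lemma r1: "r \<ge> 1" using r by simp

lemma upper_ev:
  assumes eta: "\<eta> > 0"
  shows "\<exists>D. \<forall>\<^sub>F n in sequentially. G2 n r (Lop n) \<le> (1 + \<eta>) * (SS r n * gg (real r / 2)) + D"
proof -
  obtain D where D: "\<And>n L. n \<ge> 1 \<Longrightarrow> G2 n r L \<le> (1 + \<eta>) * (SS r n * gg (real r * (real L - Lstar r n))) + D"
    using G2_upper[OF r1 eta] by blast
  have "\<forall>\<^sub>F n in sequentially. n \<ge> 1 \<and> Lstar r n \<ge> 0"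
    using Lstar_ev[of r] eventually_ge_at_top[of 1] by eventually_elim simp
  hence "\<forall>\<^sub>F n in sequentially. G2 n r (Lop n) \<le> (1 + \<eta>) * (SS r n * gg (real r / 2)) + D"
  proof eventually_elim
    case (elim n)
    then obtain L0 :: nat where L0: "\<bar>real L0 - Lstar r n\<bar> \<le> 1/2" using L0_ex by blast
    have "\<bar>real r * (real L0 - Lstar r n)\<bar> \<le> \<bar>real r / 2\<bar>"
      using L0 mult_left_mono[OF L0, of "real r"] by (simp add: abs_mult)
    hence "gg (real r * (real L0 - Lstar r n)) \<le> gg (real r / 2)" unfolding gg_def by (rule g_mono)
    hence "(1 + \<eta>) * (SS r n * gg (real r * (real L0 - Lstar r n))) \<le> (1 + \<eta>) * (SS r n * gg (real r / 2))"
      using eta SS_pos[OF r1, of n] by (intro mult_left_mono) auto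
    thus ?case using Lop_min[of n L0] D[of n L0] elim by linarith
  qed
  thus ?thesis by blast
qed

lemma part1:
  assumes eps: "\<epsilon> > 0"
  shows "\<forall>\<^sub>F n in sequentially. \<bar>real (Lop n) - Lstar r n\<bar> \<le> 1/2 + \<epsilon>"
proof -
  define A where "A = gg (real r / 2)"
  define B where "B = gg (real r * (1/2 + \<epsilon>))"
  have AB: "A < B" unfolding A_def B_def gg_def
    by (rule g_smono) (use r eps in \<open>simp add: algebra_simps\<close>)
  have A2: "A \<ge> 2" unfolding A_def by (rule gg_ge2)
  define \<eta> where "\<eta> = (B - A) / (2 * (B + A))"
  have eta0: "\<eta> > 0" unfolding \<eta>_def using AB A2 by simp
  have eta1: "\<eta> < 1" unfolding \<eta>_def using AB A2 by (simp add: field_simps)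
  have e: "\<eta> * (B + A) = (B - A) / 2"
  proof -
    have nz: "2 * B + 2 * A \<noteq> 0" "B + A \<noteq> 0" using AB A2 by auto
    show ?thesis unfolding \<eta>_def using nz by (simp add: field_simps)
  qed
  have "(1 - \<eta>) * B - (1 + \<eta>) * A = B - A - \<eta> * (B + A)" by (simp add: algebra_simps)
  also have "\<dots> = (B - A) / 2" unfolding e by (simp add: field_simps)
  finally have key: "(1 - \<eta>) * B - (1 + \<eta>) * A = (B - A) / 2" .
  obtain D1 where D1: "\<And>n L. n \<ge> 1 \<Longrightarrow> (1 - \<eta>) * (SS r n * gg (real r * (real L - Lstar r n))) - D1 \<le> G2 n r L"
    using G2_lower[OF r1 eta0 eta1] by blast
  obtain D2 where D2: "\<forall>\<^sub>F n in sequentially. G2 n r (Lop n) \<le> (1 + \<eta>) * (SS r n * A) + D2"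
    using upper_ev[OF eta0] unfolding A_def by blast
  have big: "\<forall>\<^sub>F n in sequentially. 2 * (D1 + D2) / (B - A) < SS r n" by (rule SS_big[OF r1])
  show ?thesis using D2 big eventually_ge_at_top[of 1]
  proof eventually_elim
    case (elim n)
    show ?case
    proof (rule ccontr)
      assume "\<not> ?case"
      hence c: "1/2 + \<epsilon> < \<bar>real (Lop n) - Lstar r n\<bar>" by simp
      have "\<bar>real r * (1/2 + \<epsilon>)\<bar> \<le> \<bar>real r * (real (Lop n) - Lstar r n)\<bar>"
        using c r eps by (simp add: abs_mult)
      hence "B \<le> gg (real r * (real (Lop n) - Lstar r n))" unfolding B_def gg_def by (rule g_mono)
      hence "(1 - \<eta>) * (SS r n * B) \<le> (1 - \<eta>) * (SS r n * gg (real r * (real (Lop n) - Lstar r n)))"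
        using eta1 SS_pos[OF r1, of n] by (intro mult_left_mono) auto
      hence "(1 - \<eta>) * (SS r n * B) - D1 \<le> (1 + \<eta>) * (SS r n * A) + D2"
        using D1[of n "Lop n"] elim by linarith
      moreover have "(1 - \<eta>) * (SS r n * B) - (1 + \<eta>) * (SS r n * A) = SS r n * ((1 - \<eta>) * B - (1 + \<eta>) * A)"
        by (simp add: algebra_simps)
      hence "(1 - \<eta>) * (SS r n * B) - (1 + \<eta>) * (SS r n * A) = SS r n * ((B - A) / 2)"
        unfolding key .
      ultimately have "SS r n * (B - A) \<le> 2 * (D1 + D2)" by simp
      moreover have "2 * (D1 + D2) < SS r n * (B - A)" using elim(2) AB by (simp add: field_simps)
      ultimately show False by simp
    qed
  qed
qed

end


lemma aux_lin:
  fixes a S Y D G :: real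
  assumes "a \<le> S" "2 * S \<le> Y" "(1 - 1/4) * Y - D \<le> G" "2 * D < S"
  shows "a < G"
proof -
  have "(1 - 1/4) * Y = 3/4 * Y" by simp
  thus ?thesis using assms by linarith
qed

lemma aux_lin2:
  fixes G X Z T D S s q :: real
  assumes "T = 2 * (S * s)" "(1 + 1/8) * X = 9/8 * (S * s) + 9/8 * q"
    "G \<le> (1 + 1/8) * X + D" "D < S" "q \<le> S / 2" "2 * S \<le> S * s" "0 < S"
  shows "G < T"
proof -
  have "(1 + 1/8) * X = 9/8 * X" by simp
  thus ?thesis using assms by linarith
qed

theorem theorem2:
  fixes r :: nat and Lop :: "nat \<Rightarrow> nat"
  assumes r: "r \<ge> 2"
    and Lop_min: "\<And>n L. n \<ge> 1 \<Longrightarrow> G2 n r (Lop n) \<le> G2 n r L"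
  shows "(\<exists>\<delta> :: nat \<Rightarrow> real. \<delta> \<longlonglongrightarrow> 0 \<and>
            (\<forall>n\<ge>1. Lstar r n - 1/2 - \<delta> n \<le> real (Lop n) \<and>
                     real (Lop n) \<le> Lstar r n + 1/2 + \<delta> n))
       \<and> (\<forall>\<^sub>F n in sequentially.
            1 / sqrt (2 ^ r) * K r * real n powr (real r / 2) < G2 n r (Lop n) \<and>
            G2 n r (Lop n) < sqrt (2 ^ r) * K r * real n powr (real r / 2))"
proof (intro conjI)
  have r1: "r \<ge> 1" using r by simp
  define \<delta> where "\<delta> n = max 0 (\<bar>real (Lop n) - Lstar r n\<bar> - 1/2)" for n
  have "\<delta> \<longlonglongrightarrow> 0"
  proof (rule order_tendstoI)
    fix a :: real assume "a < 0"
    thus "\<forall>\<^sub>F n in sequentially. a < \<delta> n" unfolding \<delta>_def by (intro always_eventually) auto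
  next
    fix a :: real assume a: "a > 0"
    have "\<forall>\<^sub>F n in sequentially. \<bar>real (Lop n) - Lstar r n\<bar> \<le> 1/2 + a/2"
      using part1[OF r Lop_min, of "a/2"] a by simp
    thus "\<forall>\<^sub>F n in sequentially. \<delta> n < a"
      by eventually_elim (use a in \<open>auto simp: \<delta>_def\<close>)
  qed
  moreover have "\<forall>n\<ge>1. Lstar r n - 1/2 - \<delta> n \<le> real (Lop n) \<and> real (Lop n) \<le> Lstar r n + 1/2 + \<delta> n"
    unfolding \<delta>_def by auto
  ultimately show "\<exists>\<delta> :: nat \<Rightarrow> real. \<delta> \<longlonglongrightarrow> 0 \<and>
            (\<forall>n\<ge>1. Lstar r n - 1/2 - \<delta> n \<le> real (Lop n) \<and>
                     real (Lop n) \<le> Lstar r n + 1/2 + \<delta> n)" by blast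
next
  have r1: "r \<ge> 1" using r by simp
  define s where "s = sqrt ((2::real) ^ r)"
  have "(4::real) \<le> 2 ^ r" using power_increasing[OF r, of "2::real"] by simp
  hence s2: "s \<ge> 2" unfolding s_def using real_sqrt_le_mono[of 4 "2^r"] by simp
  have ginv: "gg (real r / 2) = s + 1 / s"
    unfolding gg_def s_def s_eq[symmetric] by (simp add: powr_minus_divide)
  obtain D1 where D1: "\<And>n L. n \<ge> 1 \<Longrightarrow> (1 - 1/4) * (SS r n * gg (real r * (real L - Lstar r n))) - D1 \<le> G2 n r L"
    using G2_lower[OF r1, of "1/4"] by auto
  obtain D2 where D2: "\<forall>\<^sub>F n in sequentially. G2 n r (Lop n) \<le> (1 + 1/8) * (SS r n * gg (real r / 2)) + D2"
    using upper_ev[OF r Lop_min, of "1/8"] by auto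
  have big1: "\<forall>\<^sub>F n in sequentially. 2 * D1 < SS r n" by (rule SS_big[OF r1])
  have big2: "\<forall>\<^sub>F n in sequentially. D2 < SS r n" by (rule SS_big[OF r1])
  show "\<forall>\<^sub>F n in sequentially.
            1 / sqrt (2 ^ r) * K r * real n powr (real r / 2) < G2 n r (Lop n) \<and>
            G2 n r (Lop n) < sqrt (2 ^ r) * K r * real n powr (real r / 2)"
    using D2 big1 big2 eventually_ge_at_top[of 1]
  proof eventually_elim
    case (elim n)
    have SSp: "SS r n > 0" by (rule SS_pos[OF r1])
    have Kq: "K r * real n powr (real r / 2) = 2 * SS r n" using K_eq[OF r1] elim(4) by simp
    have lo1: "2 * SS r n \<le> SS r n * gg (real r * (real (Lop n) - Lstar r n))"
      using gg_ge2 SSp by (simp add: mult_left_mono)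
    have lo2: "(1 - 1/4) * (SS r n * gg (real r * (real (Lop n) - Lstar r n))) - D1 \<le> G2 n r (Lop n)"
      using D1 elim(4) by simp
    have "1 / sqrt (2 ^ r) * K r * real n powr (real r / 2) = 2 * SS r n / s"
      unfolding s_def using Kq by simp
    also have "\<dots> \<le> SS r n" using s2 SSp by (simp add: field_simps)
    finally have L: "1 / sqrt (2 ^ r) * K r * real n powr (real r / 2) < G2 n r (Lop n)"
      by (rule aux_lin[OF _ lo1 lo2 elim(2)])
    have u1: "SS r n * (1 / s) \<le> SS r n / 2" using s2 SSp by (simp add: field_simps)
    have u2: "SS r n * s \<ge> 2 * SS r n" using s2 SSp by simp
    have "sqrt (2 ^ r) * K r * real n powr (real r / 2) = 2 * (SS r n * s)"
      unfolding s_def using Kq by (simp add: algebra_simps)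
    moreover have "(1 + 1/8) * (SS r n * gg (real r / 2)) = (9/8) * (SS r n * s) + (9/8) * (SS r n * (1 / s))"
      unfolding ginv by (simp add: algebra_simps)
    ultimately have U: "G2 n r (Lop n) < sqrt (2 ^ r) * K r * real n powr (real r / 2)"
      by (rule aux_lin2[OF _ _ elim(1) elim(3) u1 u2 SSp])
    show ?case using L U by simp
  qed
qed

end
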